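(* Let $A\in\mathbb{R}^{n\times n}$, $B\in\mathbb{R}^n$, $n\ge2$. For $k=1,\dots,n-1$ let $\mathrm{an}_k\in\mathbb{R}^{(n-k)\times(n-k+1)}$ have full row rank $n-k$, and set $M_k=\mathrm{an}_k\mathrm{an}_{k-1}\cdots\mathrm{an}_1\in\mathbb{R}^{(n-k)\times n}$, $B_0=B$, $B_k=M_kA^kB$; assume $\mathrm{an}_kB_{k-1}=0$ for each $k$ (equivalently $M_kA^{k-1}B=0$). If $(A,B)$ is controllable, then for every $k=0,1,\dots,n-1$ the vectors $M_kA^kB,\,M_kA^{k+1}B,\dots,M_kA^{n-1}B$ (with $M_0=I_n$) are linearly independent, i.e. span a space of dimension $n-k$; in particular $B_k\neq0$ for all $k$. Equivalently, if $B_k=0$ for some $k$, then $\operatorname{rank}(B\;AB\;\cdots\;A^{n-1}B)<n$.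
   Context: $(A,B)$ controllable means the controllability matrix $(B\;AB\;\cdots\;A^{n-1}B)$ has rank $n$. *)

theory Defs
  imports "Jordan_Normal_Form.DL_Rank"
begin

fun Mprod :: "nat \<Rightarrow> (nat \<Rightarrow> real mat) \<Rightarrow> nat \<Rightarrow> real mat" where
  "Mprod n an 0 = 1\<^sub>m n"
| "Mprod n an (Suc k) = an (Suc k) * Mprod n an k"

definition ctrb_mat :: "nat \<Rightarrow> real mat \<Rightarrow> real vec \<Rightarrow> real mat" where
  "ctrb_mat n A B = mat_of_cols n (map (\<lambda>j. (A ^\<^sub>m j) *\<^sub>v B) [0..<n])"

definition controllable :: "nat \<Rightarrow> real mat \<Rightarrow> real vec \<Rightarrow> bool" where
  "controllable n A B \<longleftrightarrow> vec_space.rank n (ctrb_mat n A B) = n"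

end

theory Submission imports Defs begin

lemma sum_delta_mult:
  fixes m k :: nat
  shows "(\<Sum>l\<in>{0..<m}. f l * (if l = k then 1 else (0::real))) = (if k < m then f k else 0)"
  "(\<Sum>l\<in>{0..<m}. f l * (if k = l then 1 else (0::real))) = (if k < m then f k else 0)"
proof -
  have "(\<Sum>l\<in>{0..<m}. f l * (if l = k then 1 else (0::real))) = (\<Sum>l\<in>{0..<m}. if l = k then f l else 0)"
    by (rule sum.cong) auto
  thus "(\<Sum>l\<in>{0..<m}. f l * (if l = k then 1 else (0::real))) = (if k < m then f k else 0)"
    using sum.delta[OF finite_atLeastLessThan[of 0 m], of k f] by (simp del: sum.delta)
  thus "(\<Sum>l\<in>{0..<m}. f l * (if k = l then 1 else (0::real))) = (if k < m then f k else 0)"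
    by (simp only: eq_commute[of k])
qed

lemma surj_det:
  fixes P :: "real mat"
  assumes P: "P \<in> carrier_mat m m" and d: "det P \<noteq> 0" and x: "x \<in> carrier_vec m"
  shows "\<exists>z\<in>carrier_vec m. P *\<^sub>v z = x"
proof -
  define z where "z = (1 / det P) \<cdot>\<^sub>v (adj_mat P *\<^sub>v x)"
  have adj: "adj_mat P \<in> carrier_mat m m" "P * adj_mat P = det P \<cdot>\<^sub>m 1\<^sub>m m" using adj_mat[OF P] by auto
  have "P *\<^sub>v z = (1 / det P) \<cdot>\<^sub>v (P *\<^sub>v (adj_mat P *\<^sub>v x))"
    unfolding z_def using mult_mat_vec[OF P] adj x by auto
  also have "P *\<^sub>v (adj_mat P *\<^sub>v x) = (det P \<cdot>\<^sub>m 1\<^sub>m m) *\<^sub>v x"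
    using assoc_mult_mat_vec[OF P adj(1) x] adj(2) by simp
  also have "\<dots> = det P \<cdot>\<^sub>v x" proof (rule eq_vecI)
    fix i assume "i < dim_vec (det P \<cdot>\<^sub>v x)"
    hence i: "i < m" using x by simp
    have "((det P \<cdot>\<^sub>m 1\<^sub>m m) *\<^sub>v x) $ i = (\<Sum>l\<in>{0..<m}. (det P * x $ l) * (if i = l then 1 else 0))"
      using i x by (auto simp: scalar_prod_def intro!: sum.cong)
    also have "\<dots> = det P * x $ i" using i by (simp add: sum_delta_mult)
    finally show "((det P \<cdot>\<^sub>m 1\<^sub>m m) *\<^sub>v x) $ i = (det P \<cdot>\<^sub>v x) $ i" using i x by simp
  qed (use x in simp)
  finally have "P *\<^sub>v z = x" using d x by (auto simp: smult_smult_assoc)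
  moreover have "z \<in> carrier_vec m" unfolding z_def using adj x by simp
  ultimately show ?thesis by blast
qed

lemma step:
  fixes C Pk Q :: "real mat"
  assumes C: "C \<in> carrier_mat (m-1) m" and rk: "vec_space.rank (m-1) C = m-1"
  and Pk: "Pk \<in> carrier_mat m m" and dP: "det Pk \<noteq> 0"
  and Q: "Q \<in> carrier_mat (m-1) (m-1)"
  and Qdef: "\<And>i j. i<m-1 \<Longrightarrow> j<m-1 \<Longrightarrow> Q$$(i,j) = (C*Pk)$$(i,Suc j)"
  and z0: "\<And>i. i<m-1 \<Longrightarrow> (C*Pk)$$(i,0) = 0"
  and m: "m \<ge> 1"
  shows "det Q \<noteq> 0"
proof -
  define Sh :: "real mat" where "Sh = mat m (m-1) (\<lambda>(i,j). if i = Suc j then 1 else 0)"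
  define Sh' :: "real mat" where "Sh' = mat (m-1) m (\<lambda>(i,j). if j = Suc i then 1 else 0)"
  have Sh: "Sh \<in> carrier_mat m (m-1)" and Sh': "Sh' \<in> carrier_mat (m-1) m" unfolding Sh_def Sh'_def by auto
  have CP: "C * Pk \<in> carrier_mat (m-1) m" using C Pk by auto
  have e1: "Q = C * Pk * Sh"
  proof (rule eq_matI)
    fix i j assume ij: "i < dim_row (C * Pk * Sh)" "j < dim_col (C * Pk * Sh)"
    hence i: "i < m-1" and j: "j < m-1" using C Sh by auto
    have "(C * Pk * Sh) $$ (i,j) = (\<Sum>l\<in>{0..<m}. (C*Pk)$$(i,l) * (if l = Suc j then 1 else 0))"
      using i j CP Sh by (simp add: scalar_prod_def Sh_def carrier_matD[OF CP] carrier_matD[OF C] carrier_matD[OF Pk])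
    also have "\<dots> = (C*Pk)$$(i,Suc j)"
      using j by (simp add: sum_delta_mult)
    finally show "Q $$ (i, j) = (C * Pk * Sh) $$ (i, j)" using Qdef[OF i j] by simp
  qed (use Q C Sh in auto)
  have e2: "C * Pk = Q * Sh'"
  proof (rule eq_matI)
    fix i j assume ij: "i < dim_row (Q * Sh')" "j < dim_col (Q * Sh')"
    hence i: "i < m-1" and j: "j < m" using Q Sh' by auto
    have "(Q * Sh') $$ (i,j) = (\<Sum>l\<in>{0..<m-1}. Q$$(i,l) * (if j = Suc l then 1 else 0))"
      using i j Q Sh' by (simp add: scalar_prod_def Sh'_def carrier_matD[OF Q] carrier_matD[OF Sh'])
    also have "\<dots> = (C*Pk)$$(i,j)"
    proof (cases j)
      case 0 thus ?thesis using z0[OF i] by simp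
    next
      case (Suc l)
      have "(\<Sum>l'\<in>{0..<m-1}. Q$$(i,l') * (if j = Suc l' then 1 else 0)) = Q$$(i,l)"
        using j Suc by (simp add: sum_delta_mult)
      thus ?thesis using Qdef[OF i, of l] Suc j by simp
    qed
    finally show "(C * Pk) $$ (i, j) = (Q * Sh') $$ (i, j)" by simp
  qed (use Q C Sh' Pk in auto)
  have cs: "vec_space.col_space (m-1) C = vec_space.col_space (m-1) Q"
  proof -
    have "{y\<in>carrier_vec (dim_row C). \<exists>x\<in>carrier_vec (dim_col C). C *\<^sub>v x = y}
        = {y\<in>carrier_vec (dim_row Q). \<exists>x\<in>carrier_vec (dim_col Q). Q *\<^sub>v x = y}"
    proof (intro Collect_cong conj_cong)
      fix y :: "real vec" show "(y \<in> carrier_vec (dim_row C)) = (y \<in> carrier_vec (dim_row Q))" using C Q by simp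
      show "(\<exists>x\<in>carrier_vec (dim_col C). C *\<^sub>v x = y) = (\<exists>x\<in>carrier_vec (dim_col Q). Q *\<^sub>v x = y)"
      proof
        assume "\<exists>x\<in>carrier_vec (dim_col C). C *\<^sub>v x = y"
        then obtain x where x: "x \<in> carrier_vec m" "C *\<^sub>v x = y" using C by auto
        obtain z where z: "z \<in> carrier_vec m" "Pk *\<^sub>v z = x" using surj_det[OF Pk dP x(1)] by blast
        have "Q *\<^sub>v (Sh' *\<^sub>v z) = (Q * Sh') *\<^sub>v z" using Q Sh' z by simp
        also have "\<dots> = C *\<^sub>v (Pk *\<^sub>v z)" using e2 assoc_mult_mat_vec[OF C Pk z(1)] by simp
        finally show "\<exists>x\<in>carrier_vec (dim_col Q). Q *\<^sub>v x = y" using x z Q Sh' by (intro bexI[of _ "Sh' *\<^sub>v z"]) auto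
      next
        assume "\<exists>x\<in>carrier_vec (dim_col Q). Q *\<^sub>v x = y"
        then obtain x where x: "x \<in> carrier_vec (m-1)" "Q *\<^sub>v x = y" using Q by auto
        have "Q *\<^sub>v x = (C * Pk) *\<^sub>v (Sh *\<^sub>v x)" unfolding e1 using assoc_mult_mat_vec[OF CP Sh x(1)] .
        also have "\<dots> = C *\<^sub>v (Pk *\<^sub>v (Sh *\<^sub>v x))" using assoc_mult_mat_vec[OF C Pk, of "Sh *\<^sub>v x"] Sh x(1) by simp
        finally have "Q *\<^sub>v x = C *\<^sub>v (Pk *\<^sub>v (Sh *\<^sub>v x))" .
        thus "\<exists>x\<in>carrier_vec (dim_col C). C *\<^sub>v x = y" using x C Pk Sh
          by (intro bexI[of _ "Pk *\<^sub>v (Sh *\<^sub>v x)"]) auto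
      qed
    qed
    thus ?thesis using vec_space.col_space_eq[OF C] vec_space.col_space_eq[OF Q] by simp
  qed
  have "vec_space.rank (m-1) Q = m-1"
    using rk cs unfolding vec_space.rank_def vec_space.col_space_def by simp
  thus ?thesis using vec_space.det_rank_iff[OF Q] by simp
qed


lemma Mprod_carrier:
  assumes an: "\<And>k. 1 \<le> k \<Longrightarrow> k \<le> n - 1 \<Longrightarrow> an k \<in> carrier_mat (n - k) (n - k + 1)"
  shows "k \<le> n - 1 \<Longrightarrow> Mprod n an k \<in> carrier_mat (n - k) n"
proof (induction k)
  case 0 thus ?case by simp
next
  case (Suc k)
  have "an (Suc k) \<in> carrier_mat (n - Suc k) (n - k)"
    using an[of "Suc k"] Suc.prems by (simp add: Suc_diff_Suc)
  moreover have "Mprod n an k \<in> carrier_mat (n - k) n" using Suc by simp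
  ultimately show ?case by simp
qed

theorem mainTheorem12:
  fixes n :: nat and A :: "real mat" and B :: "real vec" and an :: "nat \<Rightarrow> real mat"
  assumes "n \<ge> 2"
    and "A \<in> carrier_mat n n"
    and "B \<in> carrier_vec n"
    and "\<And>k. 1 \<le> k \<Longrightarrow> k \<le> n - 1 \<Longrightarrow> an k \<in> carrier_mat (n - k) (n - k + 1)"
    and "\<And>k. 1 \<le> k \<Longrightarrow> k \<le> n - 1 \<Longrightarrow> vec_space.rank (n - k) (an k) = n - k"
    and "\<And>k. 1 \<le> k \<Longrightarrow> k \<le> n - 1 \<Longrightarrow>
           an k *\<^sub>v (Mprod n an (k - 1) *\<^sub>v ((A ^\<^sub>m (k - 1)) *\<^sub>v B)) = 0\<^sub>v (n - k)"
    and "controllable n A B"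
  shows "\<forall>k \<le> n - 1.
           (\<forall>c :: nat \<Rightarrow> real.
              (\<forall>i < n - k. (\<Sum>j = k..<n. c j * ((Mprod n an k *\<^sub>v ((A ^\<^sub>m j) *\<^sub>v B)) $ i)) = 0)
              \<longrightarrow> (\<forall>j \<in> {k..<n}. c j = 0))
           \<and> Mprod n an k *\<^sub>v ((A ^\<^sub>m k) *\<^sub>v B) \<noteq> 0\<^sub>v (n - k)"
proof -
  note n2 = assms(1) and A = assms(2) and B = assms(3) and an = assms(4) and rk = assms(5)
    and ann = assms(6) and ctr = assms(7)
  have MC: "k \<le> n - 1 \<Longrightarrow> Mprod n an k \<in> carrier_mat (n - k) n" for k
    using Mprod_carrier[where an=an and n=n and k=k] an by blast
  define w where "w k j = Mprod n an k *\<^sub>v ((A ^\<^sub>m j) *\<^sub>v B)" for k j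
  have wc: "k \<le> n - 1 \<Longrightarrow> w k j \<in> carrier_vec (n - k)" for k j
    unfolding w_def using MC[of k] A B by (meson mult_mat_vec_carrier pow_carrier_mat)
  define Pm where "Pm k = mat (n-k) (n-k) (\<lambda>(i,j). w k (k+j) $ i)" for k
  have Pmc: "Pm k \<in> carrier_mat (n-k) (n-k)" for k unfolding Pm_def by simp
  have colP: "k \<le> n - 1 \<Longrightarrow> j < n - k \<Longrightarrow> col (Pm k) j = w k (k+j)" for k j
    using wc[of k "k+j"] by (intro eq_vecI) (auto simp: Pm_def)
  have det: "k \<le> n - 1 \<Longrightarrow> det (Pm k) \<noteq> 0" for k
  proof (induction k)
    case 0
    have one: "1\<^sub>m n *\<^sub>v (A ^\<^sub>m j *\<^sub>v B) = A ^\<^sub>m j *\<^sub>v B" for j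
      using A B by (intro one_mult_mat_vec) (meson mult_mat_vec_carrier pow_carrier_mat)
    have "Pm 0 = ctrb_mat n A B"
      unfolding ctrb_mat_def Pm_def w_def
      using A B by (intro eq_matI) (auto simp: mat_of_cols_index one simp del: index_mult_mat_vec)
    moreover have "ctrb_mat n A B \<in> carrier_mat n n" unfolding ctrb_mat_def carrier_mat_def by simp
    ultimately show ?case using vec_space.det_rank_iff[of "ctrb_mat n A B" n] ctr
      unfolding controllable_def by simp
  next
    case (Suc k)
    define m where "m = n - k"
    define C where "C = an (Suc k)"
    have k: "k \<le> n - 1" and m1: "m \<ge> 2" using Suc.prems unfolding m_def by auto
    have nk: "n - Suc k = m - 1" "n - Suc k + 1 = m" using Suc.prems unfolding m_def by auto
    have C: "C \<in> carrier_mat (m-1) m" using an[of "Suc k"] Suc.prems nk unfolding C_def by simp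
    have rC: "vec_space.rank (m-1) C = m-1" using rk[of "Suc k"] Suc.prems nk unfolding C_def by simp
    have Pk: "Pm k \<in> carrier_mat m m" using Pmc unfolding m_def .
    have Q: "Pm (Suc k) \<in> carrier_mat (m-1) (m-1)" using Pmc nk by metis
    have CPe: "(C * Pm k) $$ (i,j) = (C *\<^sub>v w k (k+j)) $ i" if "i < m-1" "j < m" for i j
      using that C Pk colP[OF k, of j] unfolding m_def by simp
    have wS: "w (Suc k) j = C *\<^sub>v w k j" for j
    proof -
      have v: "A ^\<^sub>m j *\<^sub>v B \<in> carrier_vec n" using A B by (meson mult_mat_vec_carrier pow_carrier_mat)
      have M: "Mprod n an k \<in> carrier_mat m n" using MC[OF k] unfolding m_def .
      show ?thesis unfolding w_def using assoc_mult_mat_vec[OF C M v] by (simp add: C_def)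
    qed
    show ?case
    proof (rule step[OF C rC Pk Suc.IH[OF k] Q _ _ ])
      show "\<And>i j. i < m - 1 \<Longrightarrow> j < m - 1 \<Longrightarrow> Pm (Suc k) $$ (i, j) = (C * Pm k) $$ (i, Suc j)"
        using CPe nk by (simp add: Pm_def wS)
      show "\<And>i. i < m - 1 \<Longrightarrow> (C * Pm k) $$ (i, 0) = 0"
        using CPe ann[of "Suc k"] Suc.prems nk unfolding w_def C_def by simp
      show "1 \<le> m" using m1 by simp
    qed
  qed
  have part1: "\<forall>c :: nat \<Rightarrow> real.
              (\<forall>i < n - k. (\<Sum>j = k..<n. c j * (w k j $ i)) = 0)
              \<longrightarrow> (\<forall>j \<in> {k..<n}. c j = 0)" if k: "k \<le> n - 1" for k
  proof (intro allI impI ballI)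
    fix c :: "nat \<Rightarrow> real" and j
    assume h: "\<forall>i < n - k. (\<Sum>j = k..<n. c j * (w k j $ i)) = 0" and j: "j \<in> {k..<n}"
    define z where "z = vec (n-k) (\<lambda>l. c (k+l))"
    have zc: "z \<in> carrier_vec (n-k)" unfolding z_def by simp
    have "Pm k *\<^sub>v z = 0\<^sub>v (n-k)"
    proof (rule eq_vecI)
      fix i assume "i < dim_vec (0\<^sub>v (n - k))"
      hence i: "i < n - k" by simp
      have "(Pm k *\<^sub>v z) $ i = (\<Sum>l = 0..<n-k. w k (k+l) $ i * c (k+l))"
        using i by (simp add: Pm_def z_def scalar_prod_def)
      also have "\<dots> = (\<Sum>l = k..<n. c l * w k l $ i)"
      proof -
        have "(\<Sum>l = k..<n. c l * w k l $ i) = (\<Sum>l = 0+k..<(n-k)+k. c l * w k l $ i)"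
          using k by simp
        also have "\<dots> = (\<Sum>l = 0..<n-k. c (l+k) * w k (l+k) $ i)"
          by (rule sum.shift_bounds_nat_ivl)
        finally show ?thesis by (simp add: mult.commute add.commute)
      qed
      also have "\<dots> = 0" using h i by simp
      finally show "(Pm k *\<^sub>v z) $ i = 0\<^sub>v (n - k) $ i" using i by simp
    qed (simp add: Pm_def)
    hence "z = 0\<^sub>v (n-k)" using det_0_iff_vec_prod_zero_field[OF Pmc[of k]] det[OF k] zc by blast
    hence "z $ (j - k) = 0" using j by (simp add: less_diff_conv2)
    thus "c j = 0" using j unfolding z_def by (subst (asm) index_vec) auto
  qed
  show ?thesis
  proof (rule allI, rule impI, rule conjI)
    fix k assume k: "k \<le> n - 1"
    show "\<forall>c :: nat \<Rightarrow> real.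
              (\<forall>i < n - k. (\<Sum>j = k..<n. c j * ((Mprod n an k *\<^sub>v ((A ^\<^sub>m j) *\<^sub>v B)) $ i)) = 0)
              \<longrightarrow> (\<forall>j \<in> {k..<n}. c j = 0)" using part1[OF k] unfolding w_def .
    show "Mprod n an k *\<^sub>v ((A ^\<^sub>m k) *\<^sub>v B) \<noteq> 0\<^sub>v (n - k)"
    proof
      assume z: "Mprod n an k *\<^sub>v ((A ^\<^sub>m k) *\<^sub>v B) = 0\<^sub>v (n - k)"
      define c :: "nat \<Rightarrow> real" where "c j = (if j = k then 1 else 0)" for j
      have kk: "k \<in> {k..<n}" using k n2 by auto
      have sz: "\<forall>i < n - k. (\<Sum>j = k..<n. c j * (w k j $ i)) = 0"
      proof (intro allI impI)
        fix i assume i: "i < n - k"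
        have "(\<Sum>j = k..<n. c j * (w k j $ i)) = (\<Sum>j = k..<n. if j = k then w k j $ i else 0)"
          unfolding c_def by (rule sum.cong) auto
        also have "\<dots> = w k k $ i"
          using sum.delta[OF finite_atLeastLessThan[of k n], of k "\<lambda>j. w k j $ i"] kk by (simp del: sum.delta)
        also have "\<dots> = 0" using z i unfolding w_def by simp
        finally show "(\<Sum>j = k..<n. c j * (w k j $ i)) = 0" .
      qed
      have "c k = 0" using part1[OF k] sz kk by blast
      thus False unfolding c_def by simp
    qed
  qed
qed

end
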